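(* Let $F$ be a field of characteristic zero and let $\mathcal{Q}$ be the additive group of rational numbers. Then the only Schur rings over $\mathcal{Q}$ are the group ring $F[\mathcal{Q}]$ and the symmetric Schur ring $F[\mathcal{Q}]^{\pm}$.
   Context: For finite $C\subseteq G$, $\overline{C}=\sum_{g\in C}g\in F[G]$ and $C^*=\{g^{-1}\mid g\in C\}$. A Schur ring over a group $G$ is an $F$-subspace $\mathfrak{S}=\operatorname{Span}_F\{\overline{C}\mid C\in\mathcal{D}(\mathfrak{S})\}$ of $F[G]$ where $\mathcal{D}(\mathfrak{S})$ is a partition of $G$ into finite sets such that (i) $\{1\}\in\mathcal{D}(\mathfrak{S})$; (ii) $C\in\mathcal{D}(\mathfrak{S})\Rightarrow C^*\in\mathcal{D}(\mathfrak{S})$; (iii) for all $C,D\in\mathcal{D}(\mathfrak{S})$, $\overline{C}\,\overline{D}=\sum_{E}\lambda_{CDE}\overline{E}$ with finitely many nonzero $\lambda_{CDE}\in F$. The group ring $F[G]$ is the Schur ring with partition into singletons; for abelian $G$, the symmetric Schur ring $F[G]^{\pm}$ is the Schur ring with partition $\{\{g,g^{-1}\}\mid g\in G\}$. *)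

theory Defs
  imports Main "HOL.Rat"
begin

text \<open>The group algebra F[Q] over the additive group of rationals is modelled as
  finitely supported functions rat => F; multiplication is convolution.\<close>

definition group_ring :: "(rat \<Rightarrow> 'f::field) set" where
  "group_ring = {f. finite {x. f x \<noteq> 0}}"

definition conv :: "(rat \<Rightarrow> 'f::field) \<Rightarrow> (rat \<Rightarrow> 'f) \<Rightarrow> rat \<Rightarrow> 'f" where
  "conv f g = (\<lambda>x. \<Sum>y\<in>{y. f y \<noteq> 0}. f y * g (x - y))"

text \<open>The class sum of a finite set C, as an element of F[Q].\<close>
definition cls :: "rat set \<Rightarrow> rat \<Rightarrow> 'f::field" where
  "cls C = (\<lambda>x. if x \<in> C then 1 else 0)"

definition lincomb :: "rat set set \<Rightarrow> (rat \<Rightarrow> 'f::field) set" where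
  "lincomb D = {f. \<exists>T c. finite T \<and> T \<subseteq> D \<and> f = (\<lambda>x. \<Sum>E\<in>T. c E * cls E x)}"

definition finite_partition :: "rat set set \<Rightarrow> bool" where
  "finite_partition D \<longleftrightarrow>
     (\<forall>C\<in>D. C \<noteq> {} \<and> finite C) \<and>
     (\<forall>C\<in>D. \<forall>C'\<in>D. C \<noteq> C' \<longrightarrow> C \<inter> C' = {}) \<and>
     \<Union>D = UNIV"

definition schur_partition :: "'f::field itself \<Rightarrow> rat set set \<Rightarrow> bool" where
  "schur_partition TYPE('f) D \<longleftrightarrow>
     finite_partition D \<and>
     {0} \<in> D \<and>
     (\<forall>C\<in>D. uminus ` C \<in> D) \<and>
     (\<forall>C\<in>D. \<forall>C'\<in>D. \<exists>T (lam :: rat set \<Rightarrow> 'f). finite T \<and> T \<subseteq> D \<and>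
        conv (cls C) (cls C') = (\<lambda>x. \<Sum>E\<in>T. lam E * cls E x))"

definition schur_ring :: "(rat \<Rightarrow> 'f::field) set \<Rightarrow> bool" where
  "schur_ring S \<longleftrightarrow> (\<exists>D. schur_partition TYPE('f) D \<and> S = lincomb D)"

definition sym_schur_ring :: "(rat \<Rightarrow> 'f::field) set" where
  "sym_schur_ring = lincomb {{g, - g} | g. True}"

end

theory Submission
  imports Defs
begin

definition cc :: "rat set set \<Rightarrow> (rat \<Rightarrow> 'f) \<Rightarrow> bool" where
  "cc D f \<longleftrightarrow> (\<forall>C\<in>D. \<forall>x\<in>C. \<forall>y\<in>C. f x = f y)"

lemma fp_unique:
  assumes "finite_partition D" "C \<in> D" "C' \<in> D" "x \<in> C" "x \<in> C'"
  shows "C = C'"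
  using assms unfolding finite_partition_def by blast

lemma fp_ex:
  assumes "finite_partition D" obtains C where "C \<in> D" "x \<in> C"
  using assms unfolding finite_partition_def by blast

lemma lincomb_cc:
  assumes "finite_partition D" "f \<in> lincomb D"
  shows "cc D f"
proof -
  obtain T c where T: "finite T" "T \<subseteq> D" and f: "f = (\<lambda>x. \<Sum>E\<in>T. c E * cls E x)"
    using assms(2) unfolding lincomb_def by blast
  show ?thesis unfolding cc_def
  proof (intro ballI)
    fix C x y assume C: "C \<in> D" "x \<in> C" "y \<in> C"
    have "cls E x = cls E y" if "E \<in> T" for E
    proof (cases "E = C")
      case True then show ?thesis using C by (simp add: cls_def)
    next
      case False
      then have "E \<inter> C = {}" using assms(1) C T that unfolding finite_partition_def by blast
      then show ?thesis using C by (auto simp add: cls_def)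
    qed
    then have "(\<Sum>E\<in>T. c E * cls E x) = (\<Sum>E\<in>T. c E * cls E y)"
      by (intro sum.cong) auto
    then show "f x = f y" unfolding f by simp
  qed
qed

lemma lincomb_fin:
  assumes "finite_partition D" "f \<in> lincomb D"
  shows "finite {x. f x \<noteq> 0}"
proof -
  obtain T c where T: "finite T" "T \<subseteq> D" and f: "f = (\<lambda>x. \<Sum>E\<in>T. c E * cls E x)"
    using assms(2) unfolding lincomb_def by blast
  have "{x. f x \<noteq> 0} \<subseteq> \<Union>T"
  proof
    fix x assume "x \<in> {x. f x \<noteq> 0}"
    then have nz: "(\<Sum>E\<in>T. c E * cls E x) \<noteq> 0" unfolding f by simp
    have "\<exists>E\<in>T. c E * cls E x \<noteq> 0"
    proof (rule ccontr)
      assume "\<not> (\<exists>E\<in>T. c E * cls E x \<noteq> 0)"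
      then have "(\<Sum>E\<in>T. c E * cls E x) = 0" by (intro sum.neutral) auto
      then show False using nz by simp
    qed
    then obtain E where "E \<in> T" "c E * cls E x \<noteq> 0" by (erule bexE)
    then show "x \<in> \<Union>T" by (auto simp: cls_def split: if_splits)
  qed
  moreover have "finite (\<Union>T)"
  proof (rule finite_Union[OF T(1)])
    fix M assume "M \<in> T"
    then show "finite M" using T(2) assms(1) unfolding finite_partition_def by blast
  qed
  ultimately show ?thesis by (rule finite_subset)
qed

lemma cc_lincomb:
  fixes f :: "rat \<Rightarrow> 'f::field"
  assumes fp: "finite_partition D" and fin: "finite {x. f x \<noteq> 0}" and cc: "cc D f"
  shows "f \<in> lincomb D"
proof -
  define S where "S = {x. f x \<noteq> 0}"
  define cl where "cl x = (THE C. C \<in> D \<and> x \<in> C)" for x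
  have cl: "cl x \<in> D \<and> x \<in> cl x" for x
  proof -
    obtain C where C: "C \<in> D" "x \<in> C" using fp_ex[OF fp] by blast
    have "cl x = C" unfolding cl_def
    proof (rule the_equality)
      show "C \<in> D \<and> x \<in> C" using C by blast
      fix C' assume "C' \<in> D \<and> x \<in> C'"
      then show "C' = C" using fp_unique[OF fp _ C(1), of C' x] C(2) by blast
    qed
    then show ?thesis using C by simp
  qed
  have clE: "cl x = E" if "E \<in> D" "x \<in> E" for x E
    using cl[of x] fp_unique[OF fp, of "cl x" E x] that by blast
  define T where "T = {C \<in> D. C \<inter> S \<noteq> {}}"
  define c where "c E = f (SOME x. x \<in> E)" for E
  have "T \<subseteq> cl ` S"
  proof
    fix E assume "E \<in> T"
    then obtain x where "E \<in> D" "x \<in> E" "x \<in> S" unfolding T_def by blast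
    then have "cl x = E" using clE by blast
    then show "E \<in> cl ` S" using \<open>x \<in> S\<close> by blast
  qed
  moreover have "finite S" using fin unfolding S_def .
  ultimately have Tfin: "finite T" by (intro finite_surj[of S _ cl])
  have "f x = (\<Sum>E\<in>T. c E * cls E x)" for x
  proof -
    have "(\<Sum>E\<in>T. c E * cls E x) = (\<Sum>E\<in>T. if E = cl x then c E else 0)"
    proof (rule sum.cong)
      fix E assume "E \<in> T"
      then have "E \<in> D" unfolding T_def by auto
      show "c E * cls E x = (if E = cl x then c E else 0)"
      proof (cases "E = cl x")
        case True
        then have "x \<in> E" using cl[of x] by simp
        then show ?thesis using True by (simp add: cls_def)
      next
        case False
        then have "x \<notin> E" using clE[OF \<open>E \<in> D\<close>] by metis
        then show ?thesis using False by (simp add: cls_def)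
      qed
    qed simp
    also have "\<dots> = (if cl x \<in> T then c (cl x) else 0)"
      by (rule sum.delta[OF Tfin])
    also have "\<dots> = f x"
    proof (cases "cl x \<in> T")
      case True
      have z: "(SOME y. y \<in> cl x) \<in> cl x" using cl[of x] by (meson someI)
      have "\<forall>C\<in>D. \<forall>x\<in>C. \<forall>y\<in>C. f x = f y" using cc unfolding cc_def .
      then have "f (SOME y. y \<in> cl x) = f x" using z cl[of x] by blast
      then have "c (cl x) = f x" unfolding c_def .
      then show ?thesis using True by simp
    next
      case False
      then have "x \<notin> S" using cl[of x] unfolding T_def by blast
      then show ?thesis using False unfolding S_def by simp
    qed
    finally show ?thesis by simp
  qed
  then have fe: "f = (\<lambda>x. \<Sum>E\<in>T. c E * cls E x)" by (rule ext)
  have TD: "T \<subseteq> D" unfolding T_def by blast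
  show ?thesis unfolding lincomb_def
    by (intro CollectI exI[of _ T] exI[of _ c] conjI Tfin TD fe)
qed

lemma conv_cls:
  "conv (cls C :: rat \<Rightarrow> 'f::field) g x = (\<Sum>y\<in>C. g (x - y))"
proof -
  have "{y. (cls C y :: 'f) \<noteq> 0} = C" by (auto simp: cls_def)
  then show ?thesis unfolding conv_def by (auto simp: cls_def intro: sum.cong)
qed

lemma closure:
  fixes g :: "rat \<Rightarrow> 'f::field"
  assumes SP: "schur_partition TYPE('f) D" and C: "C \<in> D" and g: "g \<in> lincomb D"
  shows "cc D (conv (cls C) g)"
proof -
  have fp: "finite_partition D" using SP unfolding schur_partition_def by blast
  obtain T c where T: "finite T" "T \<subseteq> D" and f: "g = (\<lambda>x. \<Sum>E\<in>T. c E * cls E x)"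
    using g unfolding lincomb_def by blast
  have eq: "conv (cls C) g x = (\<Sum>E\<in>T. c E * conv (cls C) (cls E :: rat \<Rightarrow> 'f) x)" for x
  proof -
    have "conv (cls C) g x = (\<Sum>y\<in>C. \<Sum>E\<in>T. c E * cls E (x - y))"
      unfolding conv_cls f by simp
    also have "\<dots> = (\<Sum>E\<in>T. \<Sum>y\<in>C. c E * cls E (x - y))" by (rule sum.swap)
    also have "\<dots> = (\<Sum>E\<in>T. c E * conv (cls C) (cls E :: rat \<Rightarrow> 'f) x)"
      unfolding conv_cls by (simp add: sum_distrib_left)
    finally show ?thesis .
  qed
  have ccE: "cc D (conv (cls C) (cls E :: rat \<Rightarrow> 'f))" if "E \<in> T" for E
  proof -
    have ED: "E \<in> D" using that T by blast
    have prod: "\<forall>C\<in>D. \<forall>C'\<in>D. \<exists>T (lam :: rat set \<Rightarrow> 'f). finite T \<and> T \<subseteq> D \<and>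
        conv (cls C) (cls C') = (\<lambda>x. \<Sum>E\<in>T. lam E * cls E x)"
      using SP unfolding schur_partition_def by (elim conjE)
    obtain T' and lam :: "rat set \<Rightarrow> 'f" where "finite T'" "T' \<subseteq> D"
      "conv (cls C) (cls E) = (\<lambda>x. \<Sum>E\<in>T'. lam E * cls E x)"
      using prod[rule_format, OF C ED] by (elim exE conjE)
    then have "conv (cls C) (cls E :: rat \<Rightarrow> 'f) \<in> lincomb D" unfolding lincomb_def
      by (intro CollectI exI[of _ T'] exI[of _ lam] conjI)
    then show ?thesis using lincomb_cc[OF fp] by blast
  qed
  show ?thesis unfolding cc_def
  proof (intro ballI)
    fix C' x y assume H: "C' \<in> D" "x \<in> C'" "y \<in> C'"
    have "conv (cls C) (cls E :: rat \<Rightarrow> 'f) x = conv (cls C) (cls E) y" if "E \<in> T" for E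
      using ccE[OF that] H unfolding cc_def by blast
    then have "(\<Sum>E\<in>T. c E * conv (cls C) (cls E :: rat \<Rightarrow> 'f) x)
             = (\<Sum>E\<in>T. c E * conv (cls C) (cls E :: rat \<Rightarrow> 'f) y)"
      by (intro sum.cong) auto
    then show "conv (cls C) g x = conv (cls C) g y" unfolding eq .
  qed
qed


definition rc :: "rat set \<Rightarrow> nat \<Rightarrow> rat \<Rightarrow> nat" where
  "rc C k x = card {xs. set xs \<subseteq> C \<and> length xs = k \<and> sum_list xs = x}"

lemma rc_fin: "finite C \<Longrightarrow> finite {xs. set xs \<subseteq> C \<and> length xs = k \<and> sum_list xs = x}"
  by (rule finite_subset[OF _ finite_lists_length_eq[of C k]]) auto

lemma rc_Suc:
  assumes "finite C"
  shows "rc C (Suc k) x = (\<Sum>c\<in>C. rc C k (x - c))"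
proof -
  let ?A = "\<lambda>c. {xs. set xs \<subseteq> C \<and> length xs = k \<and> sum_list xs = x - c}"
  have "{xs. set xs \<subseteq> C \<and> length xs = Suc k \<and> sum_list xs = x} = (\<Union>c\<in>C. (Cons c) ` ?A c)"
  proof (intro set_eqI iffI)
    fix xs assume H: "xs \<in> {xs. set xs \<subseteq> C \<and> length xs = Suc k \<and> sum_list xs = x}"
    then obtain a l where xs: "xs = a # l" by (cases xs) auto
    then show "xs \<in> (\<Union>c\<in>C. (Cons c) ` ?A c)" using H by (intro UN_I[of a]) auto
  qed auto
  then have "rc C (Suc k) x = card (\<Union>c\<in>C. (Cons c) ` ?A c)" unfolding rc_def by simp
  also have "\<dots> = (\<Sum>c\<in>C. card ((Cons c) ` ?A c))"
    using assms rc_fin[OF assms] by (intro card_UN_disjoint) auto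
  also have "\<dots> = (\<Sum>c\<in>C. rc C k (x - c))"
    unfolding rc_def by (intro sum.cong refl card_image) (auto simp: inj_on_def)
  finally show ?thesis .
qed

lemma rc_0: "rc C 0 x = (if x = 0 then 1 else 0)"
proof -
  have "{xs. set xs \<subseteq> C \<and> length xs = 0 \<and> sum_list xs = x} = (if x = 0 then {[]} else {})"
    by auto
  then show ?thesis unfolding rc_def by simp
qed

lemma rc_supp: "finite C \<Longrightarrow> finite {x. (of_nat (rc C k x) :: 'f::field_char_0) \<noteq> 0}"
proof -
  assume C: "finite C"
  have "{x. (of_nat (rc C k x) :: 'f) \<noteq> 0} \<subseteq> sum_list ` {xs. set xs \<subseteq> C \<and> length xs = k}"
  proof
    fix x assume "x \<in> {x. (of_nat (rc C k x) :: 'f) \<noteq> 0}"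
    then have "rc C k x \<noteq> 0" by auto
    then obtain xs where "set xs \<subseteq> C" "length xs = k" "sum_list xs = x" unfolding rc_def
      by (metis (mono_tags, lifting) card.empty empty_Collect_eq)
    then show "x \<in> sum_list ` {xs. set xs \<subseteq> C \<and> length xs = k}" by auto
  qed
  then show ?thesis using finite_lists_length_eq[OF C] by (meson finite_imageI finite_subset)
qed

lemma sum_le_max:
  fixes m :: rat
  assumes "\<forall>y\<in>set xs. y \<le> m"
  shows "sum_list xs \<le> of_nat (length xs) * m \<and>
         (sum_list xs = of_nat (length xs) * m \<longrightarrow> (\<forall>y\<in>set xs. y = m))"
  using assms
proof (induction xs)
  case Nil then show ?case by simp
next
  case (Cons a xs)
  then show ?case by (auto simp: algebra_simps)
qed

lemma rc_max:
  assumes "finite C" "C \<noteq> {}"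
  shows "rc C k (of_nat k * Max C) = 1"
proof -
  let ?m = "Max C"
  have Mi: "?m \<in> C" using Max_in assms by blast
  have "{xs. set xs \<subseteq> C \<and> length xs = k \<and> sum_list xs = of_nat k * ?m} = {replicate k ?m}"
  proof (intro set_eqI iffI)
    fix xs assume "xs \<in> {xs. set xs \<subseteq> C \<and> length xs = k \<and> sum_list xs = of_nat k * ?m}"
    then have xs: "set xs \<subseteq> C" "length xs = k" "sum_list xs = of_nat k * ?m" by auto
    have "\<forall>y\<in>set xs. y \<le> ?m" using xs assms by auto
    then have "\<forall>y\<in>set xs. y = ?m" using sum_le_max[of xs ?m] xs by auto
    then have "xs = replicate k ?m" using xs replicate_length_same by metis
    then show "xs \<in> {replicate k ?m}" by simp
  qed (use Mi in \<open>auto simp: sum_list_replicate\<close>)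
  then show ?thesis unfolding rc_def by simp
qed

lemma rotate_fix:
  assumes "rotate1 xs = xs" "i < length xs"
  shows "xs ! i = xs ! 0"
proof -
  have r: "rotate n xs = xs" for n using assms(1) by (induction n) auto
  have "xs ! 0 = rotate i xs ! 0" using r by simp
  also have "\<dots> = xs ! ((i + 0) mod length xs)" using assms(2) by (intro nth_rotate) auto
  finally show ?thesis using assms(2) by simp
qed

lemma sum_list_rotate1: "sum_list (rotate1 xs) = sum_list (xs :: rat list)"
  by (cases xs) (auto simp: add.commute)

lemma rc_one:
  assumes "finite C" "k > 0" "rc C k e = 1"
  shows "\<exists>c\<in>C. e = of_nat k * c"
proof -
  let ?A = "{xs. set xs \<subseteq> C \<and> length xs = k \<and> sum_list xs = e}"
  obtain xs where A: "?A = {xs}" using assms(3) unfolding rc_def by (meson card_1_singletonE)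
  then have xs: "set xs \<subseteq> C" "length xs = k" "sum_list xs = e" by auto
  have "rotate1 xs \<in> ?A" using xs by (simp add: sum_list_rotate1)
  then have "rotate1 xs = xs" using A by auto
  then have "xs = replicate k (xs ! 0)" using rotate_fix xs(2)
    by (intro nth_equalityI) auto
  then have "e = of_nat k * xs ! 0" using xs(3) by (metis sum_list_replicate)
  moreover have "xs ! 0 \<in> C" using xs assms(2) by (metis nth_mem subsetD)
  ultimately show ?thesis by blast
qed


lemma rc_lin:
  fixes D :: "rat set set"
  assumes SP: "schur_partition TYPE('f::field_char_0) D" and C: "C \<in> D"
  shows "(\<lambda>x. of_nat (rc C n x) :: 'f) \<in> lincomb D"
proof (induction n)
  case 0
  have e: "(\<lambda>x. of_nat (rc C 0 x) :: 'f) = (\<lambda>x. \<Sum>E\<in>{{0}}. (\<lambda>_. 1) E * cls E x)"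
    by (auto simp: rc_0 cls_def)
  have "{0} \<in> D" using SP unfolding schur_partition_def by blast
  then have s: "{{0}} \<subseteq> D" by simp
  show ?case unfolding lincomb_def
    by (intro CollectI exI[of _ "{{0}}"] exI[of _ "\<lambda>_. 1"] conjI finite.intros s e)
next
  case (Suc n)
  have fp: "finite_partition D" using SP unfolding schur_partition_def by blast
  have fC: "finite C" using fp C unfolding finite_partition_def by blast
  have eq: "(\<lambda>x. of_nat (rc C (Suc n) x) :: 'f) = conv (cls C) (\<lambda>x. of_nat (rc C n x))"
    by (rule ext) (simp add: conv_cls rc_Suc[OF fC])
  have "cc D (\<lambda>x. of_nat (rc C (Suc n) x) :: 'f)"
    unfolding eq by (rule closure[OF SP C Suc])
  then show ?case using cc_lincomb[OF fp rc_supp[OF fC]] by blast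
qed

lemma rc_cc:
  fixes D :: "rat set set"
  assumes SP: "schur_partition TYPE('f::field_char_0) D" and C: "C \<in> D"
    and E: "E \<in> D" "x \<in> E" "y \<in> E"
  shows "rc C n x = rc C n y"
proof -
  have fp: "finite_partition D" using SP unfolding schur_partition_def by blast
  have "cc D (\<lambda>x. of_nat (rc C n x) :: 'f)" using lincomb_cc[OF fp rc_lin[OF SP C]] .
  then have "(of_nat (rc C n x) :: 'f) = of_nat (rc C n y)" using E unfolding cc_def by blast
  then show ?thesis by simp
qed

lemma dilate:
  fixes D :: "rat set set"
  assumes SP: "schur_partition TYPE('f::field_char_0) D" and C: "C \<in> D" and k: "k > 0"
  shows "(\<lambda>c. of_nat k * c) ` C \<in> D"
proof -
  have fp: "finite_partition D" using SP unfolding schur_partition_def by blast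
  have fC: "finite C" and neC: "C \<noteq> {}" using fp C unfolding finite_partition_def by auto
  obtain j where kj: "k = Suc j" using k by (cases k) auto
  define m where "m = Max C"
  have mC: "m \<in> C" using Max_in[OF fC neC] m_def by simp
  obtain E where E: "E \<in> D" "of_nat k * m \<in> E" using fp_ex[OF fp] by blast
  have fE: "finite E" using fp E unfolding finite_partition_def by auto
  have N1: "rc C k e = 1" if "e \<in> E" for e
    using rc_cc[OF SP C E(1) that E(2), of k] rc_max[OF fC neC, of k] m_def by simp
  have Esub: "E \<subseteq> (\<lambda>c. of_nat k * c) ` C"
    using rc_one[OF fC k N1] by blast
  have "(\<Sum>e\<in>E. rc C k e) = card E" using N1 by simp
  also have "(\<Sum>e\<in>E. rc C k e) = (\<Sum>e\<in>E. \<Sum>c\<in>C. rc C j (e - c))"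
    unfolding kj by (simp add: rc_Suc[OF fC])
  also have "\<dots> = (\<Sum>c\<in>C. \<Sum>e\<in>E. rc C j (e - c))" by (rule sum.swap)
  finally have cardE: "card E = (\<Sum>c\<in>C. \<Sum>e\<in>E. rc C j (e - c))" by simp
  define G where "G c = (\<Sum>e\<in>E. rc C j (e - c))" for c
  have mE: "uminus ` E \<in> D" and mC': "uminus ` C \<in> D"
    using SP E C unfolding schur_partition_def by auto
  have ccG: "cc D (conv (cls (uminus ` E)) (\<lambda>x. of_nat (rc C j x) :: 'f))"
    by (rule closure[OF SP mE rc_lin[OF SP C]])
  have convG: "conv (cls (uminus ` E)) (\<lambda>x. of_nat (rc C j x) :: 'f) (- c) = of_nat (G c)" for c
  proof -
    have "conv (cls (uminus ` E)) (\<lambda>x. of_nat (rc C j x) :: 'f) (- c)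
        = (\<Sum>y\<in>uminus ` E. of_nat (rc C j (- c - y)))" by (rule conv_cls)
    also have "\<dots> = (\<Sum>e\<in>E. of_nat (rc C j (- c - (- e))))"
      by (subst sum.reindex) (auto simp: inj_on_def)
    also have "\<dots> = of_nat (G c)" unfolding G_def of_nat_sum by (simp add: algebra_simps)
    finally show ?thesis .
  qed
  have Gc: "G c = G m" if "c \<in> C" for c
  proof -
    have "(of_nat (G c) :: 'f) = of_nat (G m)"
      using ccG mC' that mC unfolding cc_def convG[symmetric] by blast
    then show ?thesis by simp
  qed
  have "card E = card C * G m" using cardE Gc unfolding G_def[symmetric] by simp
  moreover have "G m \<ge> 1"
  proof -
    have "rc C j (of_nat j * m) = rc C j (of_nat k * m - m)" unfolding kj by (simp add: algebra_simps)
    have "replicate j m \<in> {xs. set xs \<subseteq> C \<and> length xs = j \<and> sum_list xs = of_nat j * m}"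
      using mC by (auto simp: sum_list_replicate)
    then have "{xs. set xs \<subseteq> C \<and> length xs = j \<and> sum_list xs = of_nat j * m} \<noteq> {}" by blast
    then have "card {xs. set xs \<subseteq> C \<and> length xs = j \<and> sum_list xs = of_nat j * m} > 0"
      using rc_fin[OF fC, of j "of_nat j * m"] by (simp add: card_gt_0_iff)
    then have "rc C j (of_nat j * m) \<ge> 1" unfolding rc_def by simp
    moreover have "rc C j (of_nat k * m - m) \<le> G m" unfolding G_def
      using E fE by (intro member_le_sum) auto
    moreover have "of_nat k * m - m = of_nat j * m" unfolding kj by (simp add: algebra_simps)
    ultimately show ?thesis by simp
  qed
  ultimately have "card E \<ge> card C" by simp
  moreover have "card ((\<lambda>c. of_nat k * c) ` C) = card C"
    using k by (intro card_image) (auto simp: inj_on_def)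
  ultimately have "E = (\<lambda>c. of_nat k * c) ` C"
    using Esub fC by (intro card_seteq) auto
  then show ?thesis using E by simp
qed


definition same :: "rat set set \<Rightarrow> rat \<Rightarrow> rat \<Rightarrow> bool" where
  "same D x y \<longleftrightarrow> (\<exists>C\<in>D. x \<in> C \<and> y \<in> C)"

context
  fixes D :: "rat set set"
  assumes SP: "schur_partition TYPE('f::field_char_0) D"
begin

lemma fpD: "finite_partition D" using SP unfolding schur_partition_def by blast

lemma same_refl: "same D x x"
  using fp_ex[OF fpD] unfolding same_def by blast

lemma same_sym: "same D x y \<Longrightarrow> same D y x"
  unfolding same_def by blast

lemma same_trans: "same D x y \<Longrightarrow> same D y z \<Longrightarrow> same D x z"
  unfolding same_def using fp_unique[OF fpD] by blast

lemma same_mult_nat: "same D x y \<Longrightarrow> k > 0 \<Longrightarrow> same D (of_nat k * x) (of_nat k * y)"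
  unfolding same_def using dilate[OF SP] by blast

lemma same_div_nat:
  assumes "same D (of_nat k * x) (of_nat k * y)" "k > 0"
  shows "same D x y"
proof -
  obtain C where C: "C \<in> D" "x \<in> C" using fp_ex[OF fpD] by blast
  have C': "(\<lambda>c. of_nat k * c) ` C \<in> D" using dilate[OF SP C(1) assms(2)] .
  obtain E where E: "E \<in> D" "of_nat k * x \<in> E" "of_nat k * y \<in> E"
    using assms(1) unfolding same_def by blast
  have "E = (\<lambda>c. of_nat k * c) ` C" using fp_unique[OF fpD E(1) C'] E(2) C(2) by blast
  then obtain c where "c \<in> C" "of_nat k * y = of_nat k * c" using E(3) by blast
  then have "y \<in> C" using assms(2) by simp
  then show ?thesis using C unfolding same_def by blast
qed

lemma same_neg: "same D x y \<Longrightarrow> same D (- x) (- y)"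
  unfolding same_def using SP unfolding schur_partition_def by blast

lemma same_mult:
  assumes "q \<noteq> 0" "same D x y"
  shows "same D (q * x) (q * y)"
proof -
  obtain n d where nd: "quotient_of q = (n, d)" by (cases "quotient_of q") auto
  have q: "q = of_int n / of_int d" using quotient_of_div[OF nd] .
  have d: "d > 0" using quotient_of_denom_pos[OF nd] .
  have n: "n \<noteq> 0" using q assms(1) by auto
  have dd: "of_nat (nat d) = (of_int d :: rat)" using d by simp
  have "same D (x / of_int d) (y / of_int d)"
    using assms(2) d dd same_div_nat[of "nat d" "x / of_int d" "y / of_int d"] by simp
  then have s: "same D (of_nat (nat \<bar>n\<bar>) * (x / of_int d)) (of_nat (nat \<bar>n\<bar>) * (y / of_int d))"
    using n by (intro same_mult_nat) auto
  have nn: "(of_nat (nat \<bar>n\<bar>) :: rat) = of_int \<bar>n\<bar>" by simp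
  show ?thesis
  proof (cases "n > 0")
    case True
    then show ?thesis using s nn q by (simp add: algebra_simps)
  next
    case False
    then have "\<bar>n\<bar> = - n" by simp
    then show ?thesis using same_neg[OF s] nn q by (simp add: algebra_simps)
  qed
qed

lemma same_zero: "same D 0 y \<Longrightarrow> y = 0"
proof -
  assume "same D 0 y"
  then obtain C where "C \<in> D" "0 \<in> C" "y \<in> C" unfolding same_def by blast
  moreover have "{0} \<in> D" using SP unfolding schur_partition_def by blast
  ultimately show "y = 0" using fp_unique[OF fpD] by blast
qed

lemma same_unit:
  assumes "same D 1 q"
  shows "q = 1 \<or> q = -1"
proof -
  have q0: "q \<noteq> 0" using same_zero same_sym assms by fastforce
  have pw: "same D 1 (q ^ n)" for n
  proof (induction n)
    case 0 then show ?case using same_refl by simp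
  next
    case (Suc n)
    have "same D (q ^ n * 1) (q ^ n * q)" using same_mult[OF _ assms] q0 by simp
    then have "same D (q ^ n) (q ^ Suc n)" by (simp add: mult.commute)
    then show ?case using same_trans[OF Suc] by blast
  qed
  obtain C where C: "C \<in> D" "1 \<in> C" using fp_ex[OF fpD] by blast
  have fC: "finite C" using fpD C unfolding finite_partition_def by blast
  have rC: "range (\<lambda>n. q ^ n) \<subseteq> C"
  proof
    fix z assume "z \<in> range (\<lambda>n. q ^ n)"
    then obtain n where z: "z = q ^ n" by blast
    obtain E where E: "E \<in> D" "1 \<in> E" "q ^ n \<in> E" using pw[of n] unfolding same_def by blast
    have "E = C" using fp_unique[OF fpD E(1) C(1) E(2) C(2)] .
    then show "z \<in> C" using E z by simp
  qed
  have fr: "finite (range (\<lambda>n. q ^ n))" using finite_subset[OF rC fC] .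
  have "\<not> inj (\<lambda>n::nat. q ^ n)"
  proof
    assume "inj (\<lambda>n::nat. q ^ n)"
    then have "finite (UNIV :: nat set)" using finite_imageD[OF fr] by blast
    then show False by simp
  qed
  then obtain a b where ab: "a \<noteq> b" "q ^ a = q ^ b" unfolding inj_def by auto
  then have ab': "\<bar>q\<bar> ^ a = \<bar>q\<bar> ^ b" by (metis power_abs)
  have gen: "\<bar>q\<bar> = 1" if "a' < b'" "\<bar>q\<bar> ^ a' = \<bar>q\<bar> ^ b'" for a' b'
  proof (rule ccontr)
    assume ne: "\<bar>q\<bar> \<noteq> 1"
    have pos: "\<bar>q\<bar> > 0" using q0 by simp
    show False
    proof (cases "\<bar>q\<bar> > 1")
      case True
      then have "\<bar>q\<bar> ^ a' < \<bar>q\<bar> ^ b'" using power_strict_increasing[OF that(1)] by blast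
      then show False using that(2) by simp
    next
      case False
      then have "\<bar>q\<bar> < 1" using ne by simp
      then have "\<bar>q\<bar> ^ b' < \<bar>q\<bar> ^ a'" using power_strict_decreasing[OF that(1) pos] by blast
      then show False using that(2) by simp
    qed
  qed
  have "\<bar>q\<bar> = 1"
  proof (cases "a < b")
    case True then show ?thesis using gen ab' by blast
  next
    case False then have "b < a" using ab(1) by simp
    then show ?thesis using gen ab' by metis
  qed
  then show ?thesis
  proof (cases "q \<ge> 0")
    case True
    then have "\<bar>q\<bar> = q" by (rule abs_of_nonneg)
    then show ?thesis using \<open>\<bar>q\<bar> = 1\<close> by simp
  next
    case False
    then have "\<bar>q\<bar> = - q" by (intro abs_of_neg) simp
    then show ?thesis using \<open>\<bar>q\<bar> = 1\<close> by simp
  qed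
qed

lemma same_pm:
  assumes "same D x y"
  shows "y = x \<or> (y = - x \<and> same D 1 (-1))"
proof (cases "x = 0")
  case True then show ?thesis using same_zero assms by simp
next
  case False
  have "same D ((1/x) * x) ((1/x) * y)" by (rule same_mult[OF _ assms]) (use False in simp)
  then have s: "same D 1 (y / x)" using False by simp
  then have "y / x = 1 \<or> y / x = -1" using same_unit by blast
  then show ?thesis
  proof
    assume "y / x = 1"
    then have "y = x" using False by (simp add: divide_eq_eq)
    then show ?thesis by simp
  next
    assume h: "y / x = -1"
    then have "y = - x" using False by (simp add: divide_eq_eq)
    moreover have "same D 1 (-1)" using s h by simp
    ultimately show ?thesis by simp
  qed
qed

lemma same_neg_all:
  assumes "same D 1 (-1)"
  shows "same D x (- x)"
  using same_mult[OF _ assms, of x] same_refl[of 0] by (cases "x = 0") auto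

end

theorem corollary4p2:
  fixes S :: "(rat \<Rightarrow> 'f::field_char_0) set"
  assumes "schur_ring S"
  shows "S = group_ring \<or> S = sym_schur_ring"
proof -
  obtain D where SP: "schur_partition TYPE('f) D" and S: "S = lincomb D"
    using assms unfolding schur_ring_def by blast
  have fp: "finite_partition D" using fpD[OF SP] .
  show ?thesis
  proof (cases "same D 1 (-1)")
    case False
    have sing: "x = y" if "C \<in> D" "x \<in> C" "y \<in> C" for C x y
    proof -
      have "same D x y" using that unfolding same_def by blast
      from same_pm[OF SP this] False show ?thesis by auto
    qed
    have "lincomb D = (group_ring :: (rat \<Rightarrow> 'f) set)"
    proof
      show "lincomb D \<subseteq> (group_ring :: (rat \<Rightarrow> 'f) set)"
      proof
        fix f :: "rat \<Rightarrow> 'f" assume "f \<in> lincomb D"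
        then have "finite {x. f x \<noteq> 0}" by (rule lincomb_fin[OF fp])
        then show "f \<in> group_ring" unfolding group_ring_def by simp
      qed
      show "(group_ring :: (rat \<Rightarrow> 'f) set) \<subseteq> lincomb D"
      proof
        fix f :: "rat \<Rightarrow> 'f" assume "f \<in> group_ring"
        then have "finite {x. f x \<noteq> 0}" unfolding group_ring_def by simp
        moreover have "cc D f" unfolding cc_def using sing by metis
        ultimately show "f \<in> lincomb D" by (rule cc_lincomb[OF fp])
      qed
    qed
    then show ?thesis using S by simp
  next
    case True
    have cls: "C = {x, - x}" if "C \<in> D" "x \<in> C" for C x
    proof
      show "C \<subseteq> {x, - x}"
      proof
        fix y assume "y \<in> C"
        then have "same D x y" using that unfolding same_def by blast
        from same_pm[OF SP this] show "y \<in> {x, - x}" by auto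
      qed
      obtain E where E: "E \<in> D" "x \<in> E" "- x \<in> E"
        using same_neg_all[OF SP True, of x] unfolding same_def by blast
      have "E = C" by (rule fp_unique[OF fp E(1) that(1) E(2) that(2)])
      then show "{x, - x} \<subseteq> C" using E that(2) by simp
    qed
    have "D = {{g, - g} | g. True}"
    proof
      show "D \<subseteq> {{g, - g} | g. True}"
      proof
        fix C assume C: "C \<in> D"
        have "C \<noteq> {}" using fp C unfolding finite_partition_def by auto
        then obtain x where "x \<in> C" by auto
        then have "C = {x, - x}" by (rule cls[OF C])
        then show "C \<in> {{g, - g} | g. True}" by blast
      qed
      show "{{g, - g} | g. True} \<subseteq> D"
      proof
        fix C assume "C \<in> {{g, - g} | g::rat. True}"
        then obtain g where g: "C = {g, - g}" by blast
        obtain E where E: "E \<in> D" "g \<in> E" using fp_ex[OF fp] by blast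
        have "E = {g, - g}" by (rule cls[OF E])
        then show "C \<in> D" using E g by simp
      qed
    qed
    then show ?thesis using S unfolding sym_schur_ring_def by simp
  qed
qed

end
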